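(* Let $W \in \mathbb{R}^{m \times n}$ have full rank, $\mathrm{rank}(W) = \min(m,n)$. For a parameterized map $\theta \mapsto f_\theta(W) \in \mathbb{R}^{m\times n}$ define its rank capacity $$\mathcal{R}(f_\theta; W) = \max_\theta \mathrm{rank}(f_\theta(W)) - \min_\theta \mathrm{rank}(f_\theta(W)).$$ (Column-sliced form.) Suppose $n = n_0 n_1$ and write $W = [W_1, \dots, W_{n_1}]$ with $W_i \in \mathbb{R}^{m \times n_0}$. For each $i$ let $W_i = P_i Q_i$ be a full-rank factorization with $P_i \in \mathbb{R}^{m \times r_c}$, $Q_i \in \mathbb{R}^{r_c \times n_0}$, $r_c = \min(m, n_0)$. Keep the $P_i$ fixed, let $\theta = (\widetilde Q_1, \dots, \widetilde Q_{n_1})$ range over all tuples of arbitrary matrices $\widetilde Q_i \in \mathbb{R}^{r_c \times n_0}$, and set $f_\theta(W) = [P_1 \widetilde Q_1, \dots, P_{n_1}\widetilde Q_{n_1}]$. Then $\mathcal{R}(f_\theta; W) = \mathrm{rank}([P_1, \dots, P_{n_1}])$. In particular, if $m \le n$ then $\mathcal{R}(f_\theta; W) = m$. (Row-sliced form.) Suppose $m = m_0 m_1$ and write $W$ as the vertical stack of blocks $W_1, \dots, W_{m_1}$ with $W_j \in \mathbb{R}^{m_0 \times n}$. For each $j$ let $W_j = U_j V_j$ be a full-rank factorization with $U_j \in \mathbb{R}^{m_0 \times r_r}$, $V_j \in \mathbb{R}^{r_r \times n}$, $r_r = \min(m_0, n)$. Keep the $V_j$ fixed, let $\phi = (\widetilde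 U_1,\dots,\widetilde U_{m_1})$ range over all tuples of arbitrary matrices $\widetilde U_j \in \mathbb{R}^{m_0 \times r_r}$, and let $g_\phi(W)$ be the vertical stack of $\widetilde U_1 V_1, \dots, \widetilde U_{m_1} V_{m_1}$. Then $\mathcal{R}(g_\phi; W) = \mathrm{rank}([V_1^\top, \dots, V_{m_1}^\top])$. In particular, if $n \le m$ then $\mathcal{R}(g_\phi; W) = n$.
   Context: A full-rank factorization $A = PQ$ of an $a\times b$ matrix with inner dimension $r=\min(a,b)$ is any such product factorization (e.g. obtained from an SVD); $[A_1,\dots,A_s]$ denotes horizontal concatenation. *)

theory Defs
  imports "Jordan_Normal_Form.DL_Rank"
begin

definition mrank :: "real mat \<Rightarrow> nat" where
  "mrank A = vec_space.rank (dim_row A) A"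

definition hcat :: "nat \<Rightarrow> nat \<Rightarrow> nat \<Rightarrow> (nat \<Rightarrow> 'a mat) \<Rightarrow> 'a mat" where
  "hcat r c k B = mat r (k * c) (\<lambda>(i, j). B (j div c) $$ (i, j mod c))"

definition vcat :: "nat \<Rightarrow> nat \<Rightarrow> nat \<Rightarrow> (nat \<Rightarrow> 'a mat) \<Rightarrow> 'a mat" where
  "vcat r c k B = mat (k * r) c (\<lambda>(i, j). B (i div r) $$ (i mod r, j))"

text \<open>The i-th (0-based) column block of width c, and the j-th row block of height r.\<close>
definition col_block :: "'a mat \<Rightarrow> nat \<Rightarrow> nat \<Rightarrow> 'a mat" where
  "col_block W c i = mat (dim_row W) c (\<lambda>(a, b). W $$ (a, i * c + b))"

definition row_block :: "'a mat \<Rightarrow> nat \<Rightarrow> nat \<Rightarrow> 'a mat" where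
  "row_block W r j = mat r (dim_col W) (\<lambda>(a, b). W $$ (j * r + a, b))"

definition rank_capacity :: "('p \<Rightarrow> real mat) \<Rightarrow> 'p set \<Rightarrow> nat" where
  "rank_capacity f \<Theta> = Max ((\<lambda>\<theta>. mrank (f \<theta>)) ` \<Theta>) - Min ((\<lambda>\<theta>. mrank (f \<theta>)) ` \<Theta>)"

end

theory Submission
  imports Defs
begin


context vec_space begin

lemma rank_mono_span:
  assumes A: "A \<in> carrier_mat n na" and B: "B \<in> carrier_mat n nb"
    and sub: "set (cols B) \<subseteq> span (set (cols A))"
  shows "rank B \<le> rank A"
proof -
  have cA: "set (cols A) \<subseteq> carrier_vec n" "set (cols B) \<subseteq> carrier_vec n"
    using A B cols_dim[of A] cols_dim[of B] by auto
  have sA: "subspace class_ring (span (set (cols A))) V"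
    using cA span_is_subspace by auto
  have sB: "subspace class_ring (span (set (cols B))) V"
    using cA span_is_subspace by auto
  have "span (set (cols B)) \<subseteq> span (set (cols A))"
    using sub cA span_is_subset span_is_submodule by auto
  then have sub2: "subspace class_ring (span (set (cols B))) (vs (span (set (cols A))))"
    using nested_subspaces[OF sA sB] by auto
  have fA: "vectorspace.fin_dim class_ring (vs (span (set (cols A))))"
    using fin_dim_span_cols[OF A] .
  have fB: "vectorspace.fin_dim class_ring (span_vs (set (cols B)))"
    using fin_dim_span_cols[OF B] .
  show ?thesis unfolding rank_def
    using vectorspace.subspace_dim[OF subspace_is_vs[OF sA] sub2 fA] fB by auto
qed

lemma rank_le_nr:
  assumes A: "A \<in> carrier_mat n na"
  shows "rank A \<le> n"
proof -
  have cA: "set (cols A) \<subseteq> carrier_vec n" using A cols_dim[of A] by auto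
  have sA: "subspace class_ring (span (set (cols A))) V"
    using cA span_is_subspace by auto
  show ?thesis unfolding rank_def
    using subspace_dim[OF sA fin_dim fin_dim_span_cols[OF A]] dim_is_n by auto
qed

lemma rank_mult_le:
  assumes A: "A \<in> carrier_mat n na" and D: "D \<in> carrier_mat na nb"
  shows "rank (A * D) \<le> rank A"
proof (rule rank_mono_span[OF A])
  show "A * D \<in> carrier_mat n nb" using A D by auto
  show "set (cols (A * D)) \<subseteq> span (set (cols A))"
  proof
    fix v assume "v \<in> set (cols (A * D))"
    then obtain j where j: "j < nb" "v = col (A * D) j" using A D
      by (metis cols_length cols_nth in_set_conv_nth index_mult_mat(3) carrier_matD(2))
    then have "v = A *\<^sub>v col D j" using A D col_mult2 by blast
    moreover have "col D j \<in> carrier_vec na" using D j by auto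
    ultimately show "v \<in> span (set (cols A))"
      using col_space_eq[OF A] A unfolding col_space_def by auto
  qed
qed


lemma rank_le_subcols:
  assumes A: "A \<in> carrier_mat n na" and B: "B \<in> carrier_mat n nb"
    and sub: "set (cols B) \<subseteq> set (cols A)"
  shows "rank B \<le> rank A"
proof (rule rank_mono_span[OF A B])
  have cA: "set (cols A) \<subseteq> carrier_vec n" using A cols_dim[of A] by auto
  show "set (cols B) \<subseteq> span (set (cols A))" using sub in_own_span[OF cA] by auto
qed

lemma mult_in_span_cols:
  "C \<in> carrier_mat n k \<Longrightarrow> x \<in> carrier_vec k \<Longrightarrow> C *\<^sub>v x \<in> span (set (cols C))"
  using col_space_eq[of C k] unfolding col_space_def by auto

lemma rank_le_via:
  assumes A: "A \<in> carrier_mat n na" and B: "B \<in> carrier_mat n nb"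
    and H: "\<forall>j<nb. \<exists>C k x. C \<in> carrier_mat n k \<and> set (cols C) \<subseteq> set (cols A)
       \<and> x \<in> carrier_vec k \<and> col B j = C *\<^sub>v x"
  shows "rank B \<le> rank A"
proof (rule rank_mono_span[OF A B])
  show "set (cols B) \<subseteq> span (set (cols A))"
  proof
    fix v assume "v \<in> set (cols B)"
    then obtain j where j: "j < nb" "v = col B j" using B
      by (metis cols_length cols_nth in_set_conv_nth carrier_matD(2))
    obtain C k x where C: "C \<in> carrier_mat n k" "set (cols C) \<subseteq> set (cols A)"
      "x \<in> carrier_vec k" "col B j = C *\<^sub>v x"
      using H[rule_format, OF j(1)] by (elim exE conjE)
    have "v \<in> span (set (cols C))" using mult_in_span_cols[OF C(1,3)] C(4) j(2) by simp
    moreover have "span (set (cols C)) \<subseteq> span (set (cols A))" by (rule span_is_monotone[OF C(2)])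
    ultimately show "v \<in> span (set (cols A))" by (rule subsetD[rotated])
  qed
qed

lemma rank_factor:
  assumes A: "A \<in> carrier_mat n nc"
  shows "\<exists>C X. C \<in> carrier_mat n (rank A) \<and> X \<in> carrier_mat (rank A) nc \<and> A = C * X"
proof -
  let ?W = "span (set (cols A))"
  have cA: "set (cols A) \<subseteq> carrier_vec n" using A cols_dim[of A] by auto
  have sW: "subspace class_ring ?W V" using cA span_is_subspace by auto
  have vsW: "vectorspace class_ring (vs ?W)" using subspace_is_vs[OF sW] .
  have sm: "submodule class_ring ?W V" using cA span_is_submodule by auto
  obtain B where B: "finite B" "vectorspace.basis class_ring (vs ?W) B"
    using vectorspace.finite_basis_exists[OF vsW fin_dim_span_cols[OF A]] by blast
  have cardB: "card B = rank A" unfolding rank_def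
    using vectorspace.dim_basis[OF vsW B] by simp
  have BW: "B \<subseteq> ?W" and genB: "LinearCombinations.module.span class_ring (vs ?W) B = ?W"
    using B(2) unfolding vectorspace.basis_def[OF vsW] by auto
  have spanB: "span B = ?W" using genB span_li_not_depend(1)[OF BW sm] by simp
  have BV: "B \<subseteq> carrier_vec n" using BW sW unfolding subspace_def submodule_def by auto
  obtain xs where xs: "set xs = B" "distinct xs" using finite_distinct_list[OF B(1)] by blast
  have lxs: "length xs = rank A" using xs cardB distinct_card by fastforce
  define C where "C = mat_of_cols n xs"
  have C: "C \<in> carrier_mat n (rank A)" unfolding C_def using lxs by auto
  have colsC: "set (cols C) = B" unfolding C_def using xs BV by (auto simp: cols_mat_of_cols)
  have "\<forall>j<nc. \<exists>x. x \<in> carrier_vec (rank A) \<and> col A j = C *\<^sub>v x"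
  proof (intro allI impI)
    fix j assume j: "j < nc"
    have "col A j \<in> set (cols A)" using A j by (metis cols_length cols_nth nth_mem carrier_matD(2))
    then have "col A j \<in> span (set (cols C))" using colsC spanB cA in_own_span[OF cA] by auto
    then show "\<exists>x. x \<in> carrier_vec (rank A) \<and> col A j = C *\<^sub>v x"
      using col_space_eq[OF C] C unfolding col_space_def by auto
  qed
  then obtain x where x: "\<And>j. j < nc \<Longrightarrow> x j \<in> carrier_vec (rank A) \<and> col A j = C *\<^sub>v x j"
    by metis
  define X where "X = mat_of_cols (rank A) (map x [0..<nc])"
  have X: "X \<in> carrier_mat (rank A) nc" unfolding X_def by auto
  have "A = C * X"
  proof (rule eq_matI)
    fix i j assume i: "i < dim_row (C * X)" and j: "j < dim_col (C * X)"
    have "col (C * X) j = C *\<^sub>v col X j" using C X j by auto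
    also have "col X j = x j" unfolding X_def using j X x by auto
    finally have "col (C * X) j = col A j" using x j X by auto
    then have "col (C * X) j $ i = col A j $ i" by simp
    then show "A $$ (i, j) = (C * X) $$ (i, j)" using i j A C X by auto
  qed (use A C X in auto)
  then show ?thesis using C X by blast
qed

lemma rank_transpose_le:
  assumes A: "A \<in> carrier_mat n nc"
  shows "vec_space.rank nc (transpose_mat A) \<le> rank A"
proof -
  obtain C X where C: "C \<in> carrier_mat n (rank A)" and X: "X \<in> carrier_mat (rank A) nc"
    and AX: "A = C * X" using rank_factor[OF A] by blast
  have "transpose_mat A = transpose_mat X * transpose_mat C" using AX transpose_mult[OF C X] by simp
  then have "vec_space.rank nc (transpose_mat A) \<le> vec_space.rank nc (transpose_mat X)"
    using vec_space.rank_mult_le[of "transpose_mat X" nc "rank A" "transpose_mat C" n] C X by auto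
  also have "\<dots> \<le> rank A" using vec_space.rank_le_nc[of "transpose_mat X" nc "rank A"] X by auto
  finally show ?thesis .
qed

end

lemma mrank_le_via:
  assumes A: "A \<in> carrier_mat m na" and B: "B \<in> carrier_mat m nb"
    and H: "\<forall>j<nb. \<exists>C k x. C \<in> carrier_mat m k \<and> set (cols C) \<subseteq> set (cols A)
       \<and> x \<in> carrier_vec k \<and> col B j = C *\<^sub>v x"
  shows "mrank B \<le> mrank A"
  unfolding mrank_def using vec_space.rank_le_via[OF A B H] A B by simp

lemma mrank_le_subcols:
  assumes A: "A \<in> carrier_mat m na" and B: "B \<in> carrier_mat m nb"
    and sub: "set (cols B) \<subseteq> set (cols A)"
  shows "mrank B \<le> mrank A"
  unfolding mrank_def using vec_space.rank_le_subcols[OF A B sub] A B by simp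

lemma mrank_le_row: "mrank A \<le> dim_row A"
  unfolding mrank_def using vec_space.rank_le_nr[of A "dim_row A" "dim_col A"] by simp

lemma mrank_zero: "mrank (0\<^sub>m m c) = 0"
  unfolding mrank_def using vec_space.rank_0I[of m c] by simp

lemma mrank_transpose: "mrank (transpose_mat A) = mrank A"
proof -
  have A: "A \<in> carrier_mat (dim_row A) (dim_col A)" by auto
  have At: "transpose_mat A \<in> carrier_mat (dim_col A) (dim_row A)" by auto
  show ?thesis unfolding mrank_def
    using vec_space.rank_transpose_le[OF A] vec_space.rank_transpose_le[OF At] by simp
qed



lemma hcat_carrier: "hcat r c k B \<in> carrier_mat r (k * c)"
  unfolding hcat_def by auto

lemma vcat_carrier: "vcat r c k B \<in> carrier_mat (k * r) c"
  unfolding vcat_def by auto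

lemma col_hcat:
  assumes "j < k * c" "dim_row (B (j div c)) = r"
  shows "col (hcat r c k B) j = col (B (j div c)) (j mod c)"
  using assms unfolding hcat_def col_def by (intro eq_vecI) auto

lemma row_vcat:
  assumes "i < k * r" "dim_col (B (i div r)) = c"
  shows "row (vcat r c k B) i = row (B (i div r)) (i mod r)"
  using assms unfolding vcat_def row_def by (intro eq_vecI) auto

lemma col_col_block:
  assumes "W \<in> carrier_mat m n" "n = n0 * n1" "j < n"
  shows "col W j = col (col_block W n0 (j div n0)) (j mod n0)"
proof -
  have "0 < n0" using assms by (cases n0) auto
  then have "j mod n0 < n0" by simp
  then show ?thesis using assms unfolding col_block_def by (intro eq_vecI) auto
qed

lemma row_row_block:
  assumes "W \<in> carrier_mat m n" "m = m0 * m1" "i < m"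
  shows "row W i = row (row_block W m0 (i div m0)) (i mod m0)"
proof -
  have "0 < m0" using assms by (cases m0) auto
  then have "i mod m0 < m0" by simp
  then show ?thesis using assms unfolding row_block_def by (intro eq_vecI) auto
qed

lemma row_mult_T:
  fixes A B :: "real mat"
  assumes A: "A \<in> carrier_mat nr n" and B: "B \<in> carrier_mat n nc" and i: "i < nr"
  shows "row (A * B) i = transpose_mat B *\<^sub>v row A i"
proof (rule eq_vecI)
  fix j assume "j < dim_vec (transpose_mat B *\<^sub>v row A i)"
  then have j: "j < nc" using B by simp
  have "row A i \<bullet> col B j = col B j \<bullet> row A i"
    by (rule comm_scalar_prod[of _ n]) (use A B j in auto)
  then show "row (A * B) i $ j = (transpose_mat B *\<^sub>v row A i) $ j"
    using A B i j by simp
qed (use A B in simp)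

lemma mult_unit_col:
  fixes A :: "real mat"
  assumes A: "A \<in> carrier_mat nr k" and j: "j < k"
  shows "A *\<^sub>v unit_vec k j = col A j"
proof (rule eq_vecI)
  fix i assume "i < dim_vec (col A j)"
  then have i: "i < nr" using A by simp
  have "row A i \<bullet> unit_vec k j = row A i $ j" using j by simp
  then show "(A *\<^sub>v unit_vec k j) $ i = col A j $ i" using A i j by simp
qed (use A in simp)

lemma idx_bound: "(k::nat) < n1 \<Longrightarrow> c < r \<Longrightarrow> k * r + c < n1 * r"
proof -
  assume "k < n1" "c < r"
  then have "Suc k * r \<le> n1 * r" by (intro mult_le_mono1) simp
  then show ?thesis using \<open>c < r\<close> by simp
qed

lemma div_bound: "(j::nat) < n1 * r \<Longrightarrow> j div r < n1"
  by (simp add: less_mult_imp_div_less)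

lemma mod_bound: "(j::nat) < n1 * r \<Longrightarrow> j mod r < r"
  by (cases r) auto

lemma cap_lemma:
  assumes up: "\<forall>\<theta>\<in>\<Theta>. mrank (f \<theta>) \<le> M"
    and t1: "\<theta>1 \<in> \<Theta>" "mrank (f \<theta>1) = M"
    and t0: "\<theta>0 \<in> \<Theta>" "mrank (f \<theta>0) = 0"
  shows "rank_capacity f \<Theta> = M"
proof -
  let ?S = "(\<lambda>\<theta>. mrank (f \<theta>)) ` \<Theta>"
  have sub: "?S \<subseteq> {..M}" using up by blast
  have fin: "finite ?S" by (rule finite_subset[OF sub]) simp
  have inS: "M \<in> ?S" using t1 by (metis image_eqI)
  have in0: "0 \<in> ?S" using t0 by (metis image_eqI)
  have "Max ?S = M"
    by (rule Max_eqI[OF fin]) (use sub inS in auto)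
  moreover have "Min ?S = 0"
    by (rule Min_eqI[OF fin]) (use in0 in auto)
  ultimately show ?thesis unfolding rank_capacity_def by simp
qed



lemma col_part:
  fixes W :: "real mat" and m n :: nat
  assumes W_dim: "W \<in> carrier_mat m n"
    and W_full: "mrank W = min m n"
    and nn: "n = n0 * n1"
    and PQ: "\<forall>i < n1. P i \<in> carrier_mat m (min m n0) \<and> Q i \<in> carrier_mat (min m n0) n0
                   \<and> col_block W n0 i = P i * Q i"
  shows "rank_capacity (\<lambda>Qt. hcat m n0 n1 (\<lambda>i. P i * Qt i))
          {Qt. \<forall>i < n1. Qt i \<in> carrier_mat (min m n0) n0}
          = mrank (hcat m (min m n0) n1 P)
      \<and> (m \<le> n \<longrightarrow>
        rank_capacity (\<lambda>Qt. hcat m n0 n1 (\<lambda>i. P i * Qt i))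
          {Qt. \<forall>i < n1. Qt i \<in> carrier_mat (min m n0) n0} = m)"
proof -
  define r where "r = min m n0"
  define HP where "HP = hcat m r n1 P"
  define F where "F = (\<lambda>Qt. hcat m n0 n1 (\<lambda>i. P i * Qt i))"
  define T where "T = {Qt :: nat \<Rightarrow> real mat. \<forall>i < n1. Qt i \<in> carrier_mat r n0}"
  have P: "\<And>i. i < n1 \<Longrightarrow> P i \<in> carrier_mat m r" using PQ r_def by auto
  have HP: "HP \<in> carrier_mat m (n1 * r)" unfolding HP_def by (rule hcat_carrier)
  have F: "\<And>Qt. F Qt \<in> carrier_mat m (n1 * n0)" unfolding F_def by (rule hcat_carrier)
  have rn0: "r \<le> n0" unfolding r_def by simp
  have colHP: "\<And>k c. k < n1 \<Longrightarrow> c < r \<Longrightarrow> col HP (k * r + c) = col (P k) c"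
  proof -
    fix k c assume k: "k < n1" and c: "c < r"
    have d: "(k * r + c) div r = k" "(k * r + c) mod r = c" using c by auto
    show "col HP (k * r + c) = col (P k) c"
      unfolding HP_def using col_hcat[of "k * r + c" n1 r P m] idx_bound[OF k c] d P[OF k] by simp
  qed
  have Psub: "\<And>k. k < n1 \<Longrightarrow> set (cols (P k)) \<subseteq> set (cols HP)"
  proof
    fix k v assume k: "k < n1" and v: "v \<in> set (cols (P k))"
    then obtain c where c: "c < r" "v = col (P k) c" using P[OF k]
      by (metis cols_length cols_nth in_set_conv_nth carrier_matD(2))
    have "col HP (k * r + c) \<in> set (cols HP)"
      using HP idx_bound[OF k c(1)] by (metis cols_length cols_nth nth_mem carrier_matD(2))
    then show "v \<in> set (cols HP)" using colHP[OF k c(1)] c(2) by simp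
  qed
  have colF: "\<And>(Qt :: nat \<Rightarrow> real mat) j. (\<forall>i<n1. Qt i \<in> carrier_mat r n0) \<Longrightarrow> j < n1 * n0 \<Longrightarrow>
      col (F Qt) j = P (j div n0) *\<^sub>v col (Qt (j div n0)) (j mod n0)"
  proof -
    fix Qt :: "nat \<Rightarrow> real mat" and j assume Qt: "\<forall>i<n1. Qt i \<in> carrier_mat r n0" and j: "j < n1 * n0"
    have k: "j div n0 < n1" using div_bound[OF j] .
    have c: "j mod n0 < n0" using mod_bound[OF j] .
    have "col (F Qt) j = col (P (j div n0) * Qt (j div n0)) (j mod n0)"
      unfolding F_def using col_hcat[of j n1 n0 "\<lambda>i. P i * Qt i" m] j P[OF k] by simp
    also have "\<dots> = P (j div n0) *\<^sub>v col (Qt (j div n0)) (j mod n0)"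
      using col_mult2[OF P[OF k] _ c] Qt k by blast
    finally show "col (F Qt) j = P (j div n0) *\<^sub>v col (Qt (j div n0)) (j mod n0)" .
  qed
  have up: "\<forall>Qt\<in>T. mrank (F Qt) \<le> mrank HP"
  proof
    fix Qt assume "Qt \<in> T"
    then have Qt: "\<forall>i<n1. Qt i \<in> carrier_mat r n0" unfolding T_def by simp
    show "mrank (F Qt) \<le> mrank HP"
    proof (rule mrank_le_via[OF HP F], intro allI impI)
      fix j assume j: "j < n1 * n0"
      have k: "j div n0 < n1" using div_bound[OF j] .
      have c: "j mod n0 < n0" using mod_bound[OF j] .
      show "\<exists>C k x. C \<in> carrier_mat m k \<and> set (cols C) \<subseteq> set (cols HP) \<and> x \<in> carrier_vec k
          \<and> col (F Qt) j = C *\<^sub>v x"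
        using P[OF k] Psub[OF k] colF[OF Qt j] Qt k c by (intro exI[of _ "P (j div n0)"] exI[of _ r]
          exI[of _ "col (Qt (j div n0)) (j mod n0)"]) auto
    qed
  qed
  define Ir where "Ir = (mat r n0 (\<lambda>(a, b). if a = b then 1 else 0) :: real mat)"
  have Ir: "Ir \<in> carrier_mat r n0" unfolding Ir_def by simp
  have colIr: "\<And>c. c < r \<Longrightarrow> col Ir c = unit_vec r c"
    unfolding Ir_def using rn0 by (intro eq_vecI) (auto simp: unit_vec_def)
  have IrT: "(\<lambda>_. Ir) \<in> T" unfolding T_def using Ir by simp
  have "mrank HP \<le> mrank (F (\<lambda>_. Ir))"
  proof (rule mrank_le_subcols[OF F HP])
    show "set (cols HP) \<subseteq> set (cols (F (\<lambda>_. Ir)))"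
    proof
      fix v assume "v \<in> set (cols HP)"
      then obtain j where j: "j < n1 * r" "v = col HP j" using HP
        by (metis cols_length cols_nth in_set_conv_nth carrier_matD(2))
      define k where "k = j div r"
      define c where "c = j mod r"
      have k: "k < n1" unfolding k_def using div_bound[OF j(1)] .
      have c: "c < r" unfolding c_def using mod_bound[OF j(1)] .
      have cn0: "c < n0" using c rn0 by simp
      have jj: "j = k * r + c" unfolding k_def c_def by simp
      have "v = col (P k) c" using colHP[OF k c] j jj by simp
      also have "\<dots> = P k *\<^sub>v col Ir c" using mult_unit_col[OF P[OF k] c] colIr[OF c] by simp
      also have "\<dots> = col (F (\<lambda>_. Ir)) (k * n0 + c)"
      proof -
        have b: "k * n0 + c < n1 * n0" using idx_bound[OF k cn0] .
        have d: "(k * n0 + c) div n0 = k" "(k * n0 + c) mod n0 = c" using cn0 by auto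
        show ?thesis using colF[of "\<lambda>_. Ir", OF _ b] Ir d by simp
      qed
      finally have "v = col (F (\<lambda>_. Ir)) (k * n0 + c)" .
      moreover have "col (F (\<lambda>_. Ir)) (k * n0 + c) \<in> set (cols (F (\<lambda>_. Ir)))"
        using F[of "\<lambda>_. Ir"] idx_bound[OF k cn0] by (metis cols_length cols_nth nth_mem carrier_matD(2))
      ultimately show "v \<in> set (cols (F (\<lambda>_. Ir)))" by simp
    qed
  qed
  then have t1: "mrank (F (\<lambda>_. Ir)) = mrank HP" using up IrT by (meson antisym)
  have ZT: "(\<lambda>_. 0\<^sub>m r n0) \<in> T" unfolding T_def by simp
  have "F (\<lambda>_. 0\<^sub>m r n0) = 0\<^sub>m m (n1 * n0)"
  proof (rule eq_matI)
    fix i j assume i: "i < dim_row (0\<^sub>m m (n1 * n0) :: real mat)" and j: "j < dim_col (0\<^sub>m m (n1 * n0) :: real mat)"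
    have k: "j div n0 < n1" using div_bound j by simp
    have c: "j mod n0 < n0" using mod_bound j by simp
    have "P (j div n0) * 0\<^sub>m r n0 = 0\<^sub>m m n0" using P[OF k] by simp
    then show "F (\<lambda>_. 0\<^sub>m r n0) $$ (i, j) = 0\<^sub>m m (n1 * n0) $$ (i, j)"
      unfolding F_def hcat_def using i j c by simp
  qed (simp_all add: F_def hcat_def)
  then have t0: "mrank (F (\<lambda>_. 0\<^sub>m r n0)) = 0" using mrank_zero by simp
  have cap: "rank_capacity F T = mrank HP" using cap_lemma[of T F "mrank HP" "\<lambda>_. Ir" "\<lambda>_. 0\<^sub>m r n0"] up IrT t1 ZT t0 by blast
  have "m \<le> n \<longrightarrow> mrank HP = m"
  proof
    assume mn: "m \<le> n"
    have "mrank W \<le> mrank HP"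
    proof (rule mrank_le_via[OF HP W_dim], intro allI impI)
      fix j assume j: "j < n"
      have j': "j < n1 * n0" using j nn by (simp add: mult.commute)
      have k: "j div n0 < n1" using div_bound[OF j'] .
      have c: "j mod n0 < n0" using mod_bound[OF j'] .
      have "col W j = col (P (j div n0) * Q (j div n0)) (j mod n0)"
        using col_col_block[OF W_dim nn j] PQ k by simp
      also have "\<dots> = P (j div n0) *\<^sub>v col (Q (j div n0)) (j mod n0)"
        using col_mult2[OF P[OF k] _ c] PQ k r_def by blast
      finally have e: "col W j = P (j div n0) *\<^sub>v col (Q (j div n0)) (j mod n0)" .
      have Qk: "Q (j div n0) \<in> carrier_mat r n0" using PQ k r_def by auto
      have "col (Q (j div n0)) (j mod n0) \<in> carrier_vec r"
        using col_dim[of "Q (j div n0)" "j mod n0"] Qk by simp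
      then show "\<exists>C k x. C \<in> carrier_mat m k \<and> set (cols C) \<subseteq> set (cols HP) \<and> x \<in> carrier_vec k
          \<and> col W j = C *\<^sub>v x"
        using P[OF k] Psub[OF k] e by blast
    qed
    moreover have "mrank HP \<le> m" using mrank_le_row[of HP] HP by simp
    ultimately show "mrank HP = m" using W_full mn by simp
  qed
  then show ?thesis using cap unfolding F_def T_def HP_def r_def by simp
qed



lemma row_part:
  fixes W :: "real mat" and m n :: nat
  assumes W_dim: "W \<in> carrier_mat m n"
    and W_full: "mrank W = min m n"
    and mm: "m = m0 * m1"
    and UV: "\<forall>j < m1. U j \<in> carrier_mat m0 (min m0 n) \<and> V j \<in> carrier_mat (min m0 n) n
                   \<and> row_block W m0 j = U j * V j"
  shows "rank_capacity (\<lambda>Ut. vcat m0 n m1 (\<lambda>j. Ut j * V j))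
          {Ut. \<forall>j < m1. Ut j \<in> carrier_mat m0 (min m0 n)}
          = mrank (hcat n (min m0 n) m1 (\<lambda>j. transpose_mat (V j)))
      \<and> (n \<le> m \<longrightarrow>
        rank_capacity (\<lambda>Ut. vcat m0 n m1 (\<lambda>j. Ut j * V j))
          {Ut. \<forall>j < m1. Ut j \<in> carrier_mat m0 (min m0 n)} = n)"
proof -
  define r where "r = min m0 n"
  define HV where "HV = hcat n r m1 (\<lambda>j. transpose_mat (V j))"
  define G where "G = (\<lambda>Ut. vcat m0 n m1 (\<lambda>j. Ut j * V j))"
  define T where "T = {Ut :: nat \<Rightarrow> real mat. \<forall>j < m1. Ut j \<in> carrier_mat m0 r}"
  have V: "\<And>i. i < m1 \<Longrightarrow> V i \<in> carrier_mat r n" using UV r_def by auto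
  have VT: "\<And>i. i < m1 \<Longrightarrow> transpose_mat (V i) \<in> carrier_mat n r" using V by auto
  have HV: "HV \<in> carrier_mat n (m1 * r)" unfolding HV_def by (rule hcat_carrier)
  have G: "\<And>Ut. G Ut \<in> carrier_mat (m1 * m0) n" unfolding G_def by (rule vcat_carrier)
  have GT: "\<And>Ut. transpose_mat (G Ut) \<in> carrier_mat n (m1 * m0)" using G by auto
  have rm0: "r \<le> m0" unfolding r_def by simp
  have colHV: "\<And>k c. k < m1 \<Longrightarrow> c < r \<Longrightarrow> col HV (k * r + c) = col (transpose_mat (V k)) c"
  proof -
    fix k c assume k: "k < m1" and c: "c < r"
    have d: "(k * r + c) div r = k" "(k * r + c) mod r = c" using c by auto
    show "col HV (k * r + c) = col (transpose_mat (V k)) c"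
      unfolding HV_def using col_hcat[of "k * r + c" m1 r "\<lambda>j. transpose_mat (V j)" n]
        idx_bound[OF k c] d VT[OF k] by simp
  qed
  have VTsub: "\<And>k. k < m1 \<Longrightarrow> set (cols (transpose_mat (V k))) \<subseteq> set (cols HV)"
  proof
    fix k v assume k: "k < m1" and v: "v \<in> set (cols (transpose_mat (V k)))"
    then obtain c where c: "c < r" "v = col (transpose_mat (V k)) c" using VT[OF k]
      by (metis cols_length cols_nth in_set_conv_nth carrier_matD(2))
    have "col HV (k * r + c) \<in> set (cols HV)"
      using HV idx_bound[OF k c(1)] by (metis cols_length cols_nth nth_mem carrier_matD(2))
    then show "v \<in> set (cols HV)" using colHV[OF k c(1)] c(2) by simp
  qed
  have colGT: "\<And>(Ut :: nat \<Rightarrow> real mat) i. (\<forall>j<m1. Ut j \<in> carrier_mat m0 r) \<Longrightarrow> i < m1 * m0 \<Longrightarrow>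
      col (transpose_mat (G Ut)) i = transpose_mat (V (i div m0)) *\<^sub>v row (Ut (i div m0)) (i mod m0)"
  proof -
    fix Ut :: "nat \<Rightarrow> real mat" and i assume Ut: "\<forall>j<m1. Ut j \<in> carrier_mat m0 r" and i: "i < m1 * m0"
    have k: "i div m0 < m1" using div_bound[OF i] .
    have c: "i mod m0 < m0" using mod_bound[OF i] .
    have "col (transpose_mat (G Ut)) i = row (G Ut) i" using G[of Ut] i by (intro col_transpose) simp
    also have "\<dots> = row (Ut (i div m0) * V (i div m0)) (i mod m0)"
      unfolding G_def using row_vcat[of i m1 m0 "\<lambda>j. Ut j * V j" n] i V[OF k] by simp
    also have "\<dots> = transpose_mat (V (i div m0)) *\<^sub>v row (Ut (i div m0)) (i mod m0)"
      using row_mult_T[OF _ V[OF k] c] Ut k by blast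
    finally show "col (transpose_mat (G Ut)) i = transpose_mat (V (i div m0)) *\<^sub>v row (Ut (i div m0)) (i mod m0)" .
  qed
  have up: "\<forall>Ut\<in>T. mrank (G Ut) \<le> mrank HV"
  proof
    fix Ut assume "Ut \<in> T"
    then have Ut: "\<forall>j<m1. Ut j \<in> carrier_mat m0 r" unfolding T_def by simp
    have "mrank (transpose_mat (G Ut)) \<le> mrank HV"
    proof (rule mrank_le_via[OF HV GT], intro allI impI)
      fix i assume i: "i < m1 * m0"
      have k: "i div m0 < m1" using div_bound[OF i] .
      have c: "i mod m0 < m0" using mod_bound[OF i] .
      have Uk: "Ut (i div m0) \<in> carrier_mat m0 r" using Ut k by simp
      have "row (Ut (i div m0)) (i mod m0) \<in> carrier_vec r"
        using row_carrier[of "Ut (i div m0)" "i mod m0"] Uk by simp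
      then show "\<exists>C k x. C \<in> carrier_mat n k \<and> set (cols C) \<subseteq> set (cols HV) \<and> x \<in> carrier_vec k
          \<and> col (transpose_mat (G Ut)) i = C *\<^sub>v x"
        using VT[OF k] VTsub[OF k] colGT[OF Ut i] by blast
    qed
    then show "mrank (G Ut) \<le> mrank HV" using mrank_transpose by simp
  qed
  define Ir where "Ir = (mat m0 r (\<lambda>(a, b). if a = b then 1 else 0) :: real mat)"
  have Ir: "Ir \<in> carrier_mat m0 r" unfolding Ir_def by simp
  have rowIr: "\<And>c. c < r \<Longrightarrow> row Ir c = unit_vec r c"
    unfolding Ir_def using rm0 by (intro eq_vecI) (auto simp: unit_vec_def)
  have IrT: "(\<lambda>_. Ir) \<in> T" unfolding T_def using Ir by simp
  have "mrank HV \<le> mrank (transpose_mat (G (\<lambda>_. Ir)))"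
  proof (rule mrank_le_subcols[OF GT HV])
    show "set (cols HV) \<subseteq> set (cols (transpose_mat (G (\<lambda>_. Ir))))"
    proof
      fix v assume "v \<in> set (cols HV)"
      then obtain j where j: "j < m1 * r" "v = col HV j" using HV
        by (metis cols_length cols_nth in_set_conv_nth carrier_matD(2))
      define k where "k = j div r"
      define c where "c = j mod r"
      have k: "k < m1" unfolding k_def using div_bound[OF j(1)] .
      have c: "c < r" unfolding c_def using mod_bound[OF j(1)] .
      have cm0: "c < m0" using c rm0 by simp
      have jj: "j = k * r + c" unfolding k_def c_def by simp
      have "v = col (transpose_mat (V k)) c" using colHV[OF k c] j jj by simp
      also have "\<dots> = transpose_mat (V k) *\<^sub>v row Ir c"
        using mult_unit_col[OF VT[OF k] c] rowIr[OF c] by simp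
      also have "\<dots> = col (transpose_mat (G (\<lambda>_. Ir))) (k * m0 + c)"
      proof -
        have b: "k * m0 + c < m1 * m0" using idx_bound[OF k cm0] .
        have d: "(k * m0 + c) div m0 = k" "(k * m0 + c) mod m0 = c" using cm0 by auto
        show ?thesis using colGT[of "\<lambda>_. Ir", OF _ b] Ir d by simp
      qed
      finally have "v = col (transpose_mat (G (\<lambda>_. Ir))) (k * m0 + c)" .
      moreover have "col (transpose_mat (G (\<lambda>_. Ir))) (k * m0 + c) \<in> set (cols (transpose_mat (G (\<lambda>_. Ir))))"
        using GT[of "\<lambda>_. Ir"] idx_bound[OF k cm0] by (metis cols_length cols_nth nth_mem carrier_matD(2))
      ultimately show "v \<in> set (cols (transpose_mat (G (\<lambda>_. Ir))))" by simp
    qed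
  qed
  then have "mrank HV \<le> mrank (G (\<lambda>_. Ir))" using mrank_transpose by simp
  then have t1: "mrank (G (\<lambda>_. Ir)) = mrank HV" using up IrT by (meson antisym)
  have ZT: "(\<lambda>_. 0\<^sub>m m0 r) \<in> T" unfolding T_def by simp
  have "G (\<lambda>_. 0\<^sub>m m0 r) = 0\<^sub>m (m1 * m0) n"
  proof (rule eq_matI)
    fix i j assume i: "i < dim_row (0\<^sub>m (m1 * m0) n :: real mat)" and j: "j < dim_col (0\<^sub>m (m1 * m0) n :: real mat)"
    have k: "i div m0 < m1" using div_bound i by simp
    have c: "i mod m0 < m0" using mod_bound i by simp
    have "0\<^sub>m m0 r * V (i div m0) = 0\<^sub>m m0 n" using V[OF k] by simp
    then show "G (\<lambda>_. 0\<^sub>m m0 r) $$ (i, j) = 0\<^sub>m (m1 * m0) n $$ (i, j)"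
      unfolding G_def vcat_def using i j c by simp
  qed (simp_all add: G_def vcat_def)
  then have t0: "mrank (G (\<lambda>_. 0\<^sub>m m0 r)) = 0" using mrank_zero by simp
  have cap: "rank_capacity G T = mrank HV"
    using cap_lemma[of T G "mrank HV" "\<lambda>_. Ir" "\<lambda>_. 0\<^sub>m m0 r"] up IrT t1 ZT t0 by blast
  have "n \<le> m \<longrightarrow> mrank HV = n"
  proof
    assume nm: "n \<le> m"
    have WT: "transpose_mat W \<in> carrier_mat n m" using W_dim by auto
    have "mrank (transpose_mat W) \<le> mrank HV"
    proof (rule mrank_le_via[OF HV WT], intro allI impI)
      fix i assume i: "i < m"
      have i': "i < m1 * m0" using i mm by (simp add: mult.commute)
      have k: "i div m0 < m1" using div_bound[OF i'] .
      have c: "i mod m0 < m0" using mod_bound[OF i'] .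
      have Uk: "U (i div m0) \<in> carrier_mat m0 r" using UV k r_def by auto
      have "col (transpose_mat W) i = row W i" using W_dim i by simp
      also have "\<dots> = row (U (i div m0) * V (i div m0)) (i mod m0)"
        using row_row_block[OF W_dim mm i] UV k by simp
      also have "\<dots> = transpose_mat (V (i div m0)) *\<^sub>v row (U (i div m0)) (i mod m0)"
        using row_mult_T[OF Uk V[OF k] c] .
      finally have e: "col (transpose_mat W) i = transpose_mat (V (i div m0)) *\<^sub>v row (U (i div m0)) (i mod m0)" .
      have "row (U (i div m0)) (i mod m0) \<in> carrier_vec r"
        using row_carrier[of "U (i div m0)" "i mod m0"] Uk by simp
      then show "\<exists>C k x. C \<in> carrier_mat n k \<and> set (cols C) \<subseteq> set (cols HV) \<and> x \<in> carrier_vec k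
          \<and> col (transpose_mat W) i = C *\<^sub>v x"
        using VT[OF k] VTsub[OF k] e by blast
    qed
    then have "mrank W \<le> mrank HV" using mrank_transpose by simp
    moreover have "mrank HV \<le> n" using mrank_le_row[of HV] HV by simp
    ultimately show "mrank HV = n" using W_full nm by simp
  qed
  then show ?thesis using cap unfolding G_def T_def HV_def r_def by simp
qed

theorem lemma2:
  fixes W :: "real mat" and m n :: nat
  assumes W_dim: "W \<in> carrier_mat m n"
    and W_full: "mrank W = min m n"
  shows
    "(\<forall>n0 n1 (P :: nat \<Rightarrow> real mat) (Q :: nat \<Rightarrow> real mat).
        n = n0 * n1 \<and>
        (\<forall>i < n1. P i \<in> carrier_mat m (min m n0) \<and> Q i \<in> carrier_mat (min m n0) n0
                   \<and> col_block W n0 i = P i * Q i)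
      \<longrightarrow>
        rank_capacity (\<lambda>Qt. hcat m n0 n1 (\<lambda>i. P i * Qt i))
          {Qt. \<forall>i < n1. Qt i \<in> carrier_mat (min m n0) n0}
          = mrank (hcat m (min m n0) n1 P)
      \<and> (m \<le> n \<longrightarrow>
        rank_capacity (\<lambda>Qt. hcat m n0 n1 (\<lambda>i. P i * Qt i))
          {Qt. \<forall>i < n1. Qt i \<in> carrier_mat (min m n0) n0} = m))
   \<and>
    (\<forall>m0 m1 (U :: nat \<Rightarrow> real mat) (V :: nat \<Rightarrow> real mat).
        m = m0 * m1 \<and>
        (\<forall>j < m1. U j \<in> carrier_mat m0 (min m0 n) \<and> V j \<in> carrier_mat (min m0 n) n
                   \<and> row_block W m0 j = U j * V j)
      \<longrightarrow>
        rank_capacity (\<lambda>Ut. vcat m0 n m1 (\<lambda>j. Ut j * V j))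
          {Ut. \<forall>j < m1. Ut j \<in> carrier_mat m0 (min m0 n)}
          = mrank (hcat n (min m0 n) m1 (\<lambda>j. transpose_mat (V j)))
      \<and> (n \<le> m \<longrightarrow>
        rank_capacity (\<lambda>Ut. vcat m0 n m1 (\<lambda>j. Ut j * V j))
          {Ut. \<forall>j < m1. Ut j \<in> carrier_mat m0 (min m0 n)} = n))"
  proof (intro conjI allI impI)
  fix n0 n1 and P Q :: "nat \<Rightarrow> real mat"
  assume h: "n = n0 * n1 \<and>
        (\<forall>i < n1. P i \<in> carrier_mat m (min m n0) \<and> Q i \<in> carrier_mat (min m n0) n0
                   \<and> col_block W n0 i = P i * Q i)"
  show "rank_capacity (\<lambda>Qt. hcat m n0 n1 (\<lambda>i. P i * Qt i))
          {Qt. \<forall>i < n1. Qt i \<in> carrier_mat (min m n0) n0}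
          = mrank (hcat m (min m n0) n1 P)"
    using col_part[OF W_dim W_full, of n0 n1 P Q] h by blast
  show "m \<le> n \<Longrightarrow> rank_capacity (\<lambda>Qt. hcat m n0 n1 (\<lambda>i. P i * Qt i))
          {Qt. \<forall>i < n1. Qt i \<in> carrier_mat (min m n0) n0} = m"
    using col_part[OF W_dim W_full, of n0 n1 P Q] h by blast
next
  fix m0 m1 and U V :: "nat \<Rightarrow> real mat"
  assume h: "m = m0 * m1 \<and>
        (\<forall>j < m1. U j \<in> carrier_mat m0 (min m0 n) \<and> V j \<in> carrier_mat (min m0 n) n
                   \<and> row_block W m0 j = U j * V j)"
  show "rank_capacity (\<lambda>Ut. vcat m0 n m1 (\<lambda>j. Ut j * V j))
          {Ut. \<forall>j < m1. Ut j \<in> carrier_mat m0 (min m0 n)}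
          = mrank (hcat n (min m0 n) m1 (\<lambda>j. transpose_mat (V j)))"
    using row_part[OF W_dim W_full, of m0 m1 U V] h by blast
  show "n \<le> m \<Longrightarrow> rank_capacity (\<lambda>Ut. vcat m0 n m1 (\<lambda>j. Ut j * V j))
          {Ut. \<forall>j < m1. Ut j \<in> carrier_mat m0 (min m0 n)} = n"
    using row_part[OF W_dim W_full, of m0 m1 U V] h by blast
qed

end
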